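(* Let $\Psi$ be an $n\times n$ complex matrix whose spectrum lies in the open unit disk $\mathcal{D}$. Let $B$ be a Blaschke product of degree at most $n-1$ that maximizes $\|\hat B(\Psi)\|$ over all Blaschke products $\hat B$ of degree at most $n-1$, and assume $\|B(\Psi)\|>1$. If $v_1$ is a right singular vector of $B(\Psi)$ corresponding to the largest singular value $\sigma_1$, then $\langle B(\Psi)v_1,v_1\rangle=0$.
   Context: A Blaschke product of degree at most $n-1$ is a function $B(z)=e^{i\theta}\prod_{j=1}^{n-1}\frac{z-\alpha_j}{1-\bar\alpha_j z}$ with $\theta\in\mathbb{R}$ and $|\alpha_j|\le 1$ (factors with $|\alpha_j|=1$ are interpreted as the corresponding unimodular constants, so the degree may be less than $n-1$). $\|\cdot\|$ is the matrix 2-norm and $\langle\cdot,\cdot\rangle$ the standard inner product on $\mathbb{C}^n$. *)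

theory Defs
  imports "HOL-Analysis.Analysis"
begin

definition cnj_transpose :: "complex^'n^'m \<Rightarrow> complex^'m^'n" where
  "cnj_transpose A = (\<chi> i j. cnj (A $ j $ i))"

definition cinner :: "complex^'n \<Rightarrow> complex^'n \<Rightarrow> complex" where
  "cinner x y = (\<Sum>i\<in>UNIV. x $ i * cnj (y $ i))"

definition mat_spectrum :: "complex^'n^'n \<Rightarrow> complex set" where
  "mat_spectrum A = {l. \<exists>v. v \<noteq> 0 \<and> A *v v = l *s v}"

definition mat_norm2 :: "complex^'n^'n \<Rightarrow> real" where
  "mat_norm2 A = onorm (\<lambda>x. A *v x)"

definition singular_values :: "complex^'n^'n \<Rightarrow> real set" where
  "singular_values A = {\<sigma>. \<sigma> \<ge> 0 \<and>
     (\<exists>v. v \<noteq> 0 \<and> (cnj_transpose A ** A) *v v = complex_of_real (\<sigma>\<^sup>2) *s v)}"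

definition largest_singular_value :: "complex^'n^'n \<Rightarrow> real" where
  "largest_singular_value A = Max (singular_values A)"

definition right_singular_vector :: "complex^'n^'n \<Rightarrow> real \<Rightarrow> complex^'n \<Rightarrow> bool" where
  "right_singular_vector A \<sigma> v \<longleftrightarrow> \<sigma> \<ge> 0 \<and> v \<noteq> 0 \<and>
     (cnj_transpose A ** A) *v v = complex_of_real (\<sigma>\<^sup>2) *s v"

text \<open>Blaschke factor (z - a)/(1 - conj a z) evaluated at a matrix.
  For |a| = 1 and spectrum of Psi in the open disk this equals the constant -a I.\<close>
definition blaschke_factor_mat :: "complex \<Rightarrow> complex^'n^'n \<Rightarrow> complex^'n^'n" where
  "blaschke_factor_mat a Psi = (Psi - mat a) ** matrix_inv (mat 1 - mat (cnj a) ** Psi)"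

definition blaschke_mat :: "real \<Rightarrow> complex list \<Rightarrow> complex^'n^'n \<Rightarrow> complex^'n^'n" where
  "blaschke_mat \<theta> as Psi = mat (cis \<theta>) ** foldr (\<lambda>a M. blaschke_factor_mat a Psi ** M) as (mat 1)"

text \<open>Parameters of a Blaschke product of degree at most m.\<close>
definition blaschke_params :: "nat \<Rightarrow> complex list \<Rightarrow> bool" where
  "blaschke_params m as \<longleftrightarrow> length as = m \<and> (\<forall>a\<in>set as. cmod a \<le> 1)"

end

theory Submission imports Defs "HOL-Computational_Algebra.Fundamental_Theorem_Algebra" begin

lemma mat_mult_left: "mat c ** (A::complex^'n^'n) = (\<chi> i j. c * A$i$j)"
proof -
  have "(\<Sum>k\<in>UNIV. (if i = k then c else 0) * A$k$j) = c * A$i$j" for i j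
  proof -
    have "(\<Sum>k\<in>UNIV. (if i = k then c else 0) * A$k$j) = (\<Sum>k\<in>UNIV. if k = i then c * A$k$j else 0)"
      by (rule sum.cong) auto
    also have "\<dots> = c * A$i$j" by simp
    finally show ?thesis .
  qed
  then show ?thesis by (simp add: vec_eq_iff matrix_matrix_mult_def mat_def)
qed
lemma mat_mult_right: "(A::complex^'n^'n) ** mat c = (\<chi> i j. c * A$i$j)"
proof -
  have "(\<Sum>k\<in>UNIV. A$i$k * (if k = j then c else 0)) = c * A$i$j" for i j
  proof -
    have "(\<Sum>k\<in>UNIV. A$i$k * (if k = j then c else 0)) = (\<Sum>k\<in>UNIV. if k = j then c * A$i$k else 0)"
      by (rule sum.cong) auto
    also have "\<dots> = c * A$i$j" by simp
    finally show ?thesis .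
  qed
  then show ?thesis by (simp add: vec_eq_iff matrix_matrix_mult_def mat_def)
qed

lemma mat_mult_comm: "mat c ** (A::complex^'n^'n) = A ** mat c"
  by (simp only: mat_mult_left mat_mult_right)

lemma mat_mult_mat: "mat a ** mat b = (mat (a*b) :: complex^'n^'n)"
  unfolding mat_mult_left by (simp add: vec_eq_iff mat_def)

lemma mat_add: "mat a + mat b = (mat (a+b) :: complex^'n^'n)"
  by (simp add: vec_eq_iff mat_def)

lemma mat_diff: "mat a - mat b = (mat (a-b) :: complex^'n^'n)"
  by (simp add: vec_eq_iff mat_def)

lemma mat_uminus: "mat (- a) = - (mat a :: complex^'n^'n)"
  by (simp add: vec_eq_iff mat_def)

lemma matrix_add_rdistrib': "((B + C) ** A) = (B ** A) + (C ** (A::complex^'n^'n))"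
  by (simp add: vec_eq_iff matrix_matrix_mult_def sum.distrib[symmetric] distrib_right)

lemma matrix_diff_rdistrib: "((B - C) ** A) = (B ** A) - (C ** (A::complex^'n^'n))"
  by (simp add: vec_eq_iff matrix_matrix_mult_def sum_subtractf[symmetric] left_diff_distrib)

lemma matrix_diff_ldistrib: "(A ** (B - C)) = (A ** B) - (A ** (C::complex^'n^'n))"
  by (simp add: vec_eq_iff matrix_matrix_mult_def sum_subtractf[symmetric] right_diff_distrib)

definition pe :: "complex^'n^'n \<Rightarrow> complex poly \<Rightarrow> complex^'n^'n" where
  "pe X p = foldr (\<lambda>a M. mat a + X ** M) (coeffs p) 0"

lemma pe_0[simp]: "pe X 0 = 0" by (simp add: pe_def)

lemma pe_pCons[simp]: "pe X (pCons a p) = mat a + X ** pe X p"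
  unfolding pe_def coeffs_pCons_eq_cCons cCons_def
  by auto

lemma pe_add: "pe X (p + q) = pe X p + pe X q"
proof (induction p q rule: poly_induct2)
  case 0 then show ?case by simp
next
  case (pCons a p b q) then show ?case
    by (simp only: add_pCons pe_pCons matrix_add_ldistrib mat_add[symmetric] add_ac)
qed

lemma pe_smult: "pe X (smult c p) = mat c ** pe X p"
proof (induction p)
  case 0 then show ?case by simp
next
  case (pCons a p)
  have "mat c ** (X ** pe X p) = X ** (mat c ** pe X p)"
    by (simp add: matrix_mul_assoc mat_mult_comm[of c X])
  with pCons show ?case
    by (simp add: matrix_add_ldistrib mat_mult_mat)
qed

lemma pe_minus: "pe X (- p) = - pe X p"
proof -
  have "pe X (- p) + pe X p = 0" by (simp add: pe_add[symmetric])
  then show ?thesis by (simp add: eq_neg_iff_add_eq_0)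
qed

lemma pe_diff: "pe X (p - q) = pe X p - pe X q"
  using pe_add[of X p "-q"] pe_minus[of X q] by simp

lemma pe_mult: "pe X (p * q) = pe X p ** pe X q"
proof (induction p)
  case 0 then show ?case by simp
next
  case (pCons a p)
  have "pe X (pCons a p * q) = pe X (smult a q) + pe X (pCons 0 (p * q))"
    by (simp add: pe_add)
  also have "\<dots> = mat a ** pe X q + X ** (pe X p ** pe X q)"
    by (simp add: pe_smult pCons)
  also have "\<dots> = (mat a + X ** pe X p) ** pe X q"
    by (simp add: matrix_add_rdistrib' matrix_mul_assoc)
  finally show ?case by simp
qed

lemma pe_comm: "pe X p ** pe X q = pe X q ** pe X p"
  by (metis pe_mult mult.commute)

lemma pe_const[simp]: "pe X [:c:] = mat c" by simp

lemma pe_lin1: "pe X [:-a, 1:] = X - mat a"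
  by (simp add: mat_uminus)

lemma pe_lin2: "pe X [:1, -cnj a:] = mat 1 - mat (cnj a) ** X"
proof -
  have "pe X [:1, -cnj a:] = mat 1 + X ** mat (- cnj a)" by simp
  also have "\<dots> = mat 1 - mat (cnj a) ** X"
    by (simp add: mat_uminus mat_mult_comm[of _ X] matrix_diff_ldistrib[of X 0 "mat (cnj a)", simplified])
  finally show ?thesis .
qed


lemma pe_1[simp]: "pe X 1 = mat 1"
  by (simp add: one_pCons)

lemma matrix_inv_works:
  assumes "invertible (A::complex^'n^'n)"
  shows "A ** matrix_inv A = mat 1" "matrix_inv A ** A = mat 1"
proof -
  have "A ** matrix_inv A = mat 1 \<and> matrix_inv A ** A = mat 1"
    using assms unfolding matrix_inv_def invertible_def by (rule someI_ex)
  then show "A ** matrix_inv A = mat 1" "matrix_inv A ** A = mat 1" by auto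
qed

lemma mat_mult_vec: "mat c *v (x::complex^'n) = c *s x"
proof -
  have "(\<Sum>k\<in>UNIV. (if i = k then c else 0) * x$k) = c * x$i" for i
  proof -
    have "(\<Sum>k\<in>UNIV. (if i = k then c else 0) * x$k) = (\<Sum>k\<in>UNIV. if k = i then c * x$k else 0)"
      by (rule sum.cong) auto
    also have "\<dots> = c * x$i" by simp
    finally show ?thesis .
  qed
  then show ?thesis by (simp add: vec_eq_iff matrix_vector_mult_def mat_def)
qed

lemma matrix_vector_diff_rdistrib': "(A - B) *v (x::complex^'n) = A *v x - B *v x"
  by (simp add: vec_eq_iff matrix_vector_mult_def sum_subtractf[symmetric] left_diff_distrib)

lemma invertible_factor:
  fixes Psi :: "complex^'n^'n"
  assumes spec: "\<forall>l\<in>mat_spectrum Psi. cmod l < 1" and a: "cmod a \<le> 1"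
  shows "invertible (mat 1 - mat (cnj a) ** Psi)"
proof (rule ccontr)
  assume ni: "\<not> invertible (mat 1 - mat (cnj a) ** Psi)"
  then obtain x where x: "(mat 1 - mat (cnj a) ** Psi) *v x = 0" "x \<noteq> 0"
    unfolding invertible_left_inverse matrix_left_invertible_ker by blast
  have eq: "x = cnj a *s (Psi *v x)"
    using x(1) by (simp add: matrix_vector_diff_rdistrib' matrix_vector_mul_assoc[symmetric] mat_mult_vec)
  have a0: "a \<noteq> 0" using eq x(2) by auto
  have "Psi *v x = (1 / cnj a) *s x"
    using a0 by (subst eq) (simp add: vector_smult_assoc)
  then have "1 / cnj a \<in> mat_spectrum Psi" using x(2) unfolding mat_spectrum_def by blast
  with spec have "cmod (1 / cnj a) < 1" by blast
  then have "1 < cmod a" using a0 by (simp add: norm_divide divide_less_eq)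
  with a show False by simp
qed



definition Pl :: "complex list \<Rightarrow> complex poly" where
  "Pl as = prod_list (map (\<lambda>a. [:-a, 1:]) as)"
definition Ql :: "complex list \<Rightarrow> complex poly" where
  "Ql as = prod_list (map (\<lambda>a. [:1, -cnj a:]) as)"

lemma coeff_lin_mult_Suc: "coeff ([:x, y:] * p) (Suc n) = x * coeff p (Suc n) + y * coeff p n"
  by (simp add: mult_pCons_left)

lemma Pl_deg: "degree (Pl as) \<le> length as \<and> coeff (Pl as) (length as) = 1"
proof (induction as)
  case Nil then show ?case by (simp add: Pl_def)
next
  case (Cons a as)
  have P: "Pl (a # as) = [:-a, 1:] * Pl as" by (simp add: Pl_def)
  have "degree (Pl (a # as)) \<le> degree [:-a, 1:] + degree (Pl as)"
    unfolding P by (rule degree_mult_le)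
  also have "\<dots> \<le> length (a # as)" using Cons by simp
  finally have d: "degree (Pl (a # as)) \<le> length (a # as)" .
  have "coeff (Pl as) (Suc (length as)) = 0" using Cons by (simp add: coeff_eq_0)
  then have "coeff (Pl (a # as)) (length (a # as)) = 1"
    unfolding P using Cons by (simp only: coeff_lin_mult_Suc length_Cons) simp
  with d show ?case by blast
qed

lemma Ql_deg: "degree (Ql as) \<le> length as \<and> coeff (Ql as) (length as) = prod_list (map (\<lambda>a. - cnj a) as)"
proof (induction as)
  case Nil then show ?case by (simp add: Ql_def)
next
  case (Cons a as)
  have P: "Ql (a # as) = [:1, -cnj a:] * Ql as" by (simp add: Ql_def)
  have "degree (Ql (a # as)) \<le> degree [:1, -cnj a:] + degree (Ql as)"
    unfolding P by (rule degree_mult_le)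
  also have "\<dots> \<le> length (a # as)" using Cons by simp
  finally have d: "degree (Ql (a # as)) \<le> length (a # as)" .
  have "coeff (Ql as) (Suc (length as)) = 0" using Cons by (simp add: coeff_eq_0)
  then have "coeff (Ql (a # as)) (length (a # as)) = prod_list (map (\<lambda>a. - cnj a) (a # as))"
    unfolding P using Cons by (simp only: coeff_lin_mult_Suc length_Cons) simp
  with d show ?case by blast
qed

lemma norm_prod_list_le1: "\<forall>a\<in>set as. cmod a \<le> 1 \<Longrightarrow> cmod (prod_list (map (\<lambda>a. - cnj a) as)) \<le> 1"
proof (induction as)
  case Nil then show ?case by simp
next
  case (Cons a as)
  then show ?case by (simp add: norm_mult mult_le_one)
qed

lemma poly_Ql_circle:
  assumes z: "cmod z = 1"
  shows "poly (Ql as) z = z ^ length as * cnj (poly (Pl as) z)"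
proof (induction as)
  case Nil then show ?case by (simp add: Pl_def Ql_def)
next
  case (Cons a as)
  have zz: "z * cnj z = 1"
    using z complex_norm_square[of z] by simp
  have "poly (Ql (a#as)) z = (1 - cnj a * z) * poly (Ql as) z" by (simp add: Ql_def algebra_simps)
  also have "1 - cnj a * z = z * cnj (z - a)"
    using zz by (simp add: algebra_simps)
  also have "z * cnj (z - a) * poly (Ql as) z = z * cnj (z - a) * (z ^ length as * cnj (poly (Pl as) z))"
    using Cons by simp
  also have "\<dots> = z ^ length (a # as) * cnj ((z - a) * poly (Pl as) z)"
    by (simp add: algebra_simps)
  also have "(z - a) * poly (Pl as) z = poly (Pl (a # as)) z" by (simp add: Pl_def algebra_simps)
  finally show ?case .
qed

lemma circle_infinite: "infinite {z::complex. cmod z = 1}"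
proof
  assume f: "finite {z::complex. cmod z = 1}"
  have "{-1..1::real} \<subseteq> Re ` {z::complex. cmod z = 1}"
  proof
    fix r :: real assume r: "r \<in> {-1..1}"
    define z where "z = Complex r (sqrt (1 - r^2))"
    have "1 - r^2 \<ge> 0" using r by (simp add: abs_square_le_1 abs_le_iff)
    then have "cmod z = 1" unfolding z_def cmod_def by simp
    then show "r \<in> Re ` {z::complex. cmod z = 1}" by (force simp: z_def)
  qed
  moreover have "finite (Re ` {z::complex. cmod z = 1})" using f by simp
  ultimately have "finite {-1..1::real}" by (rule finite_subset)
  then show False using infinite_Icc[of "-1::real" 1] by simp
qed

lemma poly_zero_circle:
  assumes "\<And>z. cmod z = 1 \<Longrightarrow> poly p z = 0"
  shows "p = 0"
proof (rule ccontr)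
  assume "p \<noteq> 0"
  then have "finite {z. poly p z = 0}" by (rule poly_roots_finite)
  moreover have "{z::complex. cmod z = 1} \<subseteq> {z. poly p z = 0}" using assms by auto
  ultimately show False using circle_infinite finite_subset by blast
qed

lemma factor_le:
  assumes a: "cmod a \<le> 1" and b: "cmod b \<ge> 1"
  shows "cmod (1 - cnj a * b) \<le> cmod (b - a)"
proof -
  have "complex_of_real ((cmod (b - a))^2 - (cmod (1 - cnj a * b))^2) = of_real (((cmod b)^2 - 1) * (1 - (cmod a)^2))"
    apply (simp only: of_real_diff of_real_mult of_real_1 complex_norm_square complex_cnj_diff complex_cnj_mult complex_cnj_cnj complex_cnj_one)
    by algebra
  then have "(cmod (b - a))^2 - (cmod (1 - cnj a * b))^2 = ((cmod b)^2 - 1) * (1 - (cmod a)^2)"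
    by (simp only: of_real_eq_iff)
  also have "\<dots> \<ge> 0"
  proof (rule mult_nonneg_nonneg)
    show "0 \<le> (cmod b)\<^sup>2 - 1" using b by (simp add: one_le_power)
    show "0 \<le> 1 - (cmod a)\<^sup>2" using a by (simp add: power_le_one)
  qed
  finally have "(cmod (1 - cnj a * b))^2 \<le> (cmod (b - a))^2" by simp
  then show ?thesis by (rule power2_le_imp_le) simp
qed

lemma PQ_le:
  assumes "\<forall>a\<in>set as. cmod a \<le> 1" "cmod b \<ge> 1"
  shows "cmod (poly (Ql as) b) \<le> cmod (poly (Pl as) b)"
  using assms(1)
proof (induction as)
  case Nil then show ?case by (simp add: Pl_def Ql_def)
next
  case (Cons a as)
  have "cmod (1 - cnj a * b) \<le> cmod (b - a)" using Cons.prems assms(2) by (intro factor_le) auto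
  moreover have "cmod (poly (Ql as) b) \<le> cmod (poly (Pl as) b)" using Cons by simp
  ultimately have "cmod (1 - cnj a * b) * cmod (poly (Ql as) b) \<le> cmod (b - a) * cmod (poly (Pl as) b)"
    by (intro mult_mono) auto
  moreover have "poly (Ql (a#as)) b = (1 - cnj a * b) * poly (Ql as) b" by (simp add: Ql_def algebra_simps)
  moreover have "poly (Pl (a#as)) b = (b - a) * poly (Pl as) b" by (simp add: Pl_def algebra_simps)
  ultimately show ?case by (simp add: norm_mult)
qed

lemma poly_Pl_zero: "poly (Pl as) b = 0 \<Longrightarrow> b \<in> set as"
  by (induction as) (auto simp: Pl_def)


lemma circle_identity:
  fixes Q P Qb Pb w e c t :: complex
  assumes hQ: "Q = w * cnj P" and hQb: "Qb = w * cnj Pb" and hN: "c * Pb = e * P - t * Q"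
    and hw: "w * cnj w = 1" and he: "e * cnj e = 1"
  shows "Q - cnj t * e * P = e * cnj c * Qb"
proof -
  have c1: "cnj c * cnj Pb = cnj e * cnj P - cnj t * cnj Q"
    using arg_cong[OF hN, of cnj] by simp
  have c2: "cnj Q = cnj w * P" using hQ by simp
  have "e * cnj c * Qb = e * w * (cnj c * cnj Pb)" using hQb by (simp add: algebra_simps)
  also have "\<dots> = e * w * (cnj e * cnj P - cnj t * (cnj w * P))" by (simp add: c1 c2)
  also have "\<dots> = (e * cnj e) * (w * cnj P) - cnj t * e * P * (w * cnj w)" by (simp add: algebra_simps)
  also have "\<dots> = Q - cnj t * e * P" by (simp add: he hw hQ)
  finally show ?thesis by simp
qed

lemma perturb_poly:
  fixes as :: "complex list" and t :: complex and \<theta> :: real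
  assumes as: "\<forall>a\<in>set as. cmod a \<le> 1" and t: "cmod t < 1"
  shows "\<exists>bs c. length bs = length as \<and> (\<forall>b\<in>set bs. cmod b \<le> 1) \<and> c \<noteq> 0 \<and>
     smult (cis \<theta>) (Pl as) - smult t (Ql as) = smult c (Pl bs) \<and>
     Ql as - smult (cnj t * cis \<theta>) (Pl as) = smult (cis \<theta> * cnj c) (Ql bs)"
proof -
  define m where "m = length as"
  define N where "N = smult (cis \<theta>) (Pl as) - smult t (Ql as)"
  define c where "c = coeff N m"
  define pr where "pr = prod_list (map (\<lambda>a. - cnj a) as)"
  have cN: "c = cis \<theta> - t * pr"
    using Pl_deg[of as] Ql_deg[of as] by (simp add: c_def N_def m_def pr_def)
  have "cmod pr \<le> 1" unfolding pr_def using as by (rule norm_prod_list_le1)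
  then have "cmod (t * pr) \<le> cmod t" by (simp add: norm_mult mult_left_le)
  with t have tp: "cmod (t * pr) < 1" by simp
  have c0: "c \<noteq> 0"
  proof
    assume "c = 0"
    then have "cis \<theta> = t * pr" using cN by simp
    then have "cmod (t * pr) = 1" by (metis norm_cis)
    then show False using tp by simp
  qed
  have "degree N \<le> m"
  proof -
    have "degree N \<le> max (degree (smult (cis \<theta>) (Pl as))) (degree (smult t (Ql as)))"
      unfolding N_def by (rule degree_diff_le_max)
    moreover have "degree (smult (cis \<theta>) (Pl as)) \<le> m"
      using degree_smult_le[of "cis \<theta>" "Pl as"] Pl_deg[of as] by (simp add: m_def)
    moreover have "degree (smult t (Ql as)) \<le> m"
      using degree_smult_le[of t "Ql as"] Ql_deg[of as] by (simp add: m_def)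
    ultimately show ?thesis by simp
  qed
  moreover have "m \<le> degree N" using c0 unfolding c_def by (rule le_degree)
  ultimately have dN: "degree N = m" by simp
  have N0: "N \<noteq> 0" using c0 c_def by auto
  obtain bs where mb: "mset bs = proots N" using ex_mset by blast
  have len: "length bs = m"
    using size_proots_complex[of N] dN mb by (metis size_mset)
  have lc: "lead_coeff N = c" by (simp add: c_def dN)
  have Nfac: "N = smult c (Pl bs)"
  proof -
    have "(\<Prod>x\<in>#proots N. [:-x, 1:]) = Pl bs"
      unfolding Pl_def mb[symmetric] mset_map[symmetric] prod_mset_prod_list ..
    then show ?thesis using complex_poly_decompose_multiset[of N] lc by simp
  qed
  have roots: "cmod b \<le> 1" if b: "b \<in> set bs" for b
  proof (rule ccontr)
    assume nb: "\<not> cmod b \<le> 1"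
    have "b \<in># proots N" using b mb by (metis set_mset_mset)
    then have "poly N b = 0" using N0 set_count_proots by blast
    then have eq: "cis \<theta> * poly (Pl as) b = t * poly (Ql as) b" by (simp add: N_def)
    have le: "cmod (poly (Ql as) b) \<le> cmod (poly (Pl as) b)" using as nb by (intro PQ_le) auto
    have "cmod (poly (Pl as) b) = cmod t * cmod (poly (Ql as) b)"
      using arg_cong[OF eq, of cmod] by (simp add: norm_mult)
    also have "\<dots> \<le> cmod t * cmod (poly (Pl as) b)" using le by (simp add: mult_left_mono)
    finally have le2: "cmod (poly (Pl as) b) \<le> cmod t * cmod (poly (Pl as) b)" .
    have "\<not> cmod (poly (Pl as) b) > 0"
    proof
      assume p: "cmod (poly (Pl as) b) > 0"
      have "cmod t * cmod (poly (Pl as) b) < 1 * cmod (poly (Pl as) b)"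
        using t p by (intro mult_strict_right_mono) auto
      with le2 show False by simp
    qed
    then have "poly (Pl as) b = 0" by simp
    then have "b \<in> set as" by (rule poly_Pl_zero)
    with as nb show False by auto
  qed
  have D: "Ql as - smult (cnj t * cis \<theta>) (Pl as) = smult (cis \<theta> * cnj c) (Ql bs)"
  proof -
    have "Ql as - smult (cnj t * cis \<theta>) (Pl as) - smult (cis \<theta> * cnj c) (Ql bs) = 0"
    proof (rule poly_zero_circle)
      fix z :: complex assume z: "cmod z = 1"
      define w where "w = z ^ m"
      have hQ: "poly (Ql as) z = w * cnj (poly (Pl as) z)" using poly_Ql_circle[OF z, of as] by (simp add: w_def m_def)
      have hQb: "poly (Ql bs) z = w * cnj (poly (Pl bs) z)" using poly_Ql_circle[OF z, of bs] by (simp add: w_def len)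
      have hN: "c * poly (Pl bs) z = cis \<theta> * poly (Pl as) z - t * poly (Ql as) z"
        using arg_cong[OF Nfac, of "\<lambda>p. poly p z"] by (simp add: N_def)
      have "cmod w = 1" using z by (simp add: w_def norm_power)
      then have hw: "w * cnj w = 1" using complex_norm_square[of w] by simp
      have he: "cis \<theta> * cnj (cis \<theta>) = 1" using complex_norm_square[of "cis \<theta>"] by simp
      have "poly (Ql as) z - cnj t * cis \<theta> * poly (Pl as) z = cis \<theta> * cnj c * poly (Ql bs) z"
        by (rule circle_identity[OF hQ hQb hN hw he])
      then show "poly (Ql as - smult (cnj t * cis \<theta>) (Pl as) - smult (cis \<theta> * cnj c) (Ql bs)) z = 0"
        by simp
    qed
    then show ?thesis by simp
  qed
  show ?thesis
  proof (intro exI[of _ bs] exI[of _ c] conjI)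
    show "length bs = length as" using len m_def by simp
    show "\<forall>b\<in>set bs. cmod b \<le> 1" using roots by blast
    show "c \<noteq> 0" by (rule c0)
    show "smult (cis \<theta>) (Pl as) - smult t (Ql as) = smult c (Pl bs)" using Nfac N_def by simp
    show "Ql as - smult (cnj t * cis \<theta>) (Pl as) = smult (cis \<theta> * cnj c) (Ql bs)" by (rule D)
  qed
qed


lemma factor_list:
  fixes Psi :: "complex^'n^'n"
  assumes spec: "\<forall>l\<in>mat_spectrum Psi. cmod l < 1" and as: "\<forall>a\<in>set as. cmod a \<le> 1"
  shows "foldr (\<lambda>a M. blaschke_factor_mat a Psi ** M) as (mat 1) ** pe Psi (Ql as) = pe Psi (Pl as)
     \<and> invertible (pe Psi (Ql as))"
  using as
proof (induction as)
  case Nil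
  then show ?case by (auto simp: Pl_def Ql_def invertible_def)
next
  case (Cons a as)
  define Y where "Y = foldr (\<lambda>a M. blaschke_factor_mat a Psi ** M) as (mat 1)"
  define R where "R = pe Psi [:1, -cnj a:]"
  have IH: "Y ** pe Psi (Ql as) = pe Psi (Pl as)" "invertible (pe Psi (Ql as))"
    using Cons by (auto simp: Y_def)
  have Rinv: "invertible R" unfolding R_def pe_lin2 using invertible_factor[OF spec] Cons.prems by auto
  have bfR: "blaschke_factor_mat a Psi ** R = pe Psi [:-a, 1:]"
    unfolding blaschke_factor_mat_def pe_lin1 R_def[symmetric]
    using matrix_inv_works(2)[OF Rinv] unfolding R_def pe_lin2
    by (simp add: matrix_mul_assoc[symmetric])
  have Q: "pe Psi (Ql (a # as)) = pe Psi (Ql as) ** R"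
    unfolding Ql_def list.map prod_list.Cons pe_mult R_def by (rule pe_comm)
  have P: "pe Psi (Pl (a # as)) = pe Psi [:-a, 1:] ** pe Psi (Pl as)"
    unfolding Pl_def list.map prod_list.Cons pe_mult ..
  have "foldr (\<lambda>a M. blaschke_factor_mat a Psi ** M) (a # as) (mat 1) ** pe Psi (Ql (a # as))
     = blaschke_factor_mat a Psi ** (Y ** pe Psi (Ql as)) ** R"
    by (simp add: Y_def Q matrix_mul_assoc)
  also have "\<dots> = blaschke_factor_mat a Psi ** (pe Psi (Pl as) ** R)"
    by (simp add: IH matrix_mul_assoc)
  also have "\<dots> = blaschke_factor_mat a Psi ** (R ** pe Psi (Pl as))"
    unfolding R_def by (simp only: pe_comm)
  also have "\<dots> = pe Psi (Pl (a # as))"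
    by (simp add: matrix_mul_assoc bfR P)
  finally show ?case
    using Q IH(2) Rinv invertible_mult by auto
qed



lemma mat_scalar_swap: "X ** mat k = mat k ** (X::complex^'n^'n)"
  by (rule mat_mult_comm[symmetric])

lemma perturb_mat:
  fixes Psi :: "complex^'n^'n"
  assumes spec: "\<forall>l\<in>mat_spectrum Psi. cmod l < 1" and as: "\<forall>a\<in>set as. cmod a \<le> 1"
    and t: "cmod t < 1"
  shows "\<exists>\<theta>' bs. length bs = length as \<and> (\<forall>b\<in>set bs. cmod b \<le> 1) \<and>
     blaschke_mat \<theta>' bs Psi ** (mat 1 - mat (cnj t) ** blaschke_mat \<theta> as Psi)
       = blaschke_mat \<theta> as Psi - mat t"
proof -
  obtain bs c where bs: "length bs = length as" "\<forall>b\<in>set bs. cmod b \<le> 1" "c \<noteq> 0"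
    and hN: "smult (cis \<theta>) (Pl as) - smult t (Ql as) = smult c (Pl bs)"
    and hD: "Ql as - smult (cnj t * cis \<theta>) (Pl as) = smult (cis \<theta> * cnj c) (Ql bs)"
    using perturb_poly[OF as t, of \<theta>] by blast
  define X where "X = foldr (\<lambda>a M. blaschke_factor_mat a Psi ** M) as (mat 1)"
  define X' where "X' = foldr (\<lambda>a M. blaschke_factor_mat a Psi ** M) bs (mat 1)"
  define Pa where "Pa = pe Psi (Pl as)"
  define Qa where "Qa = pe Psi (Ql as)"
  define Pb where "Pb = pe Psi (Pl bs)"
  define Qb where "Qb = pe Psi (Ql bs)"
  have FA: "X ** Qa = Pa" "invertible Qa"
    using factor_list[OF spec as] by (auto simp: X_def Qa_def Pa_def)
  have FB: "X' ** Qb = Pb"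
    using factor_list[OF spec bs(2)] by (auto simp: X'_def Qb_def Pb_def)
  define u where "u = c / (cis \<theta> * cnj c)"
  have u1: "cmod u = 1" using bs(3) by (simp add: u_def norm_divide norm_mult)
  have "u \<noteq> 0" using u1 by auto
  then have cu: "cis (Arg u) = u" using u1 cis_Arg[of u] by (simp add: sgn_div_norm)
  have ucc: "u * (cis \<theta> * cnj c) = c" using bs(3) by (simp add: u_def)
  define M where "M = blaschke_mat \<theta> as Psi"
  define M' where "M' = blaschke_mat (Arg u) bs Psi"
  have M: "M = mat (cis \<theta>) ** X" by (simp add: M_def blaschke_mat_def X_def)
  have M': "M' = mat u ** X'" by (simp add: M'_def blaschke_mat_def X'_def cu)
  have eN: "mat (cis \<theta>) ** Pa - mat t ** Qa = mat c ** Pb"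
    using arg_cong[OF hN, of "pe Psi"] by (simp add: pe_diff pe_smult Pa_def Qa_def Pb_def)
  have eD: "Qa - mat (cnj t * cis \<theta>) ** Pa = mat (cis \<theta> * cnj c) ** Qb"
    using arg_cong[OF hD, of "pe Psi"] by (simp add: pe_diff pe_smult Pa_def Qa_def Qb_def)
  have MQ: "M ** Qa = mat (cis \<theta>) ** Pa" by (simp add: M FA(1) matrix_mul_assoc[symmetric])
  have L1: "(mat 1 - mat (cnj t) ** M) ** Qa = mat (cis \<theta> * cnj c) ** Qb"
  proof -
    have "(mat 1 - mat (cnj t) ** M) ** Qa = Qa - mat (cnj t) ** (M ** Qa)"
      by (simp add: matrix_diff_rdistrib matrix_mul_assoc)
    also have "\<dots> = Qa - mat (cnj t * cis \<theta>) ** Pa"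
      by (simp add: MQ matrix_mul_assoc mat_mult_mat)
    finally show ?thesis using eD by simp
  qed
  have L2: "M' ** (mat (cis \<theta> * cnj c) ** Qb) = mat c ** Pb"
  proof -
    have "M' ** (mat (cis \<theta> * cnj c) ** Qb) = mat u ** (X' ** mat (cis \<theta> * cnj c)) ** Qb"
      by (simp add: M' matrix_mul_assoc)
    also have "\<dots> = mat u ** mat (cis \<theta> * cnj c) ** (X' ** Qb)"
      by (simp only: mat_scalar_swap[of X'] matrix_mul_assoc)
    also have "\<dots> = mat c ** Pb" by (simp add: mat_mult_mat ucc FB)
    finally show ?thesis .
  qed
  have L3: "(M - mat t) ** Qa = mat c ** Pb"
    using eN by (simp add: matrix_diff_rdistrib MQ)
  have "M' ** (mat 1 - mat (cnj t) ** M) ** Qa = (M - mat t) ** Qa"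
    by (simp add: matrix_mul_assoc[symmetric] L1 L2 L3)
  then have "M' ** (mat 1 - mat (cnj t) ** M) ** Qa ** matrix_inv Qa = (M - mat t) ** Qa ** matrix_inv Qa"
    by simp
  then have "M' ** (mat 1 - mat (cnj t) ** M) = M - mat t"
    by (simp add: matrix_mul_assoc[symmetric] matrix_inv_works(1)[OF FA(2)])
  then show ?thesis using bs
    by (intro exI[of _ "Arg u"] exI[of _ bs]) (simp add: M_def M'_def)
qed



lemma cinner_add_left: "cinner (x + y) z = cinner x z + cinner y z"
  by (simp add: cinner_def distrib_right sum.distrib)
lemma cinner_diff_left: "cinner (x - y) z = cinner x z - cinner y z"
  by (simp add: cinner_def left_diff_distrib sum_subtractf)
lemma cinner_diff_right: "cinner x (y - z) = cinner x y - cinner x z"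
  by (simp add: cinner_def right_diff_distrib sum_subtractf)
lemma cinner_scale_left: "cinner (c *s x) y = c * cinner x y"
  by (simp add: cinner_def sum_distrib_left mult.assoc)
lemma cinner_scale_right: "cinner x (c *s y) = cnj c * cinner x y"
  by (simp add: cinner_def sum_distrib_left algebra_simps)
lemma cinner_commute: "cinner y x = cnj (cinner x y)"
  by (simp add: cinner_def mult.commute)

lemma inner_cinner: "inner x y = Re (cinner x y)"
  by (simp add: inner_vec_def cinner_def inner_complex_def Re_sum)

lemma cinner_self: "cinner x x = complex_of_real ((norm x)^2)"
proof -
  have "Im (cinner x x) = 0" by (simp add: cinner_def Im_sum)
  then have "cinner x x = complex_of_real (Re (cinner x x))" by (simp add: complex_eq_iff)
  also have "Re (cinner x x) = (norm x)^2" by (simp add: power2_norm_eq_inner inner_cinner)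
  finally show ?thesis .
qed

lemma cinner_mat: "cinner (A *v x) y = cinner x (cnj_transpose A *v y)"
proof -
  have "cinner (A *v x) y = (\<Sum>i\<in>UNIV. \<Sum>j\<in>UNIV. A$i$j * x$j * cnj (y$i))"
    by (simp add: cinner_def matrix_vector_mult_def sum_distrib_right)
  also have "\<dots> = (\<Sum>j\<in>UNIV. \<Sum>i\<in>UNIV. A$i$j * x$j * cnj (y$i))" by (rule sum.swap)
  also have "\<dots> = cinner x (cnj_transpose A *v y)"
    by (simp add: cinner_def matrix_vector_mult_def cnj_transpose_def sum_distrib_left algebra_simps)
  finally show ?thesis .
qed

lemma cinner_H: "cinner ((cnj_transpose A ** A) *v x) y = cinner (A *v x) (A *v y)"
proof -
  have "cinner ((cnj_transpose A ** A) *v x) y = cinner (cnj_transpose A *v (A *v x)) y"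
    by (simp add: matrix_vector_mul_assoc)
  also have "\<dots> = cnj (cinner y (cnj_transpose A *v (A *v x)))" by (rule cinner_commute)
  also have "\<dots> = cnj (cinner (A *v y) (A *v x))" by (simp add: cinner_mat)
  also have "\<dots> = cinner (A *v x) (A *v y)" by (simp add: cinner_commute[of "A *v x"])
  finally show ?thesis .
qed

lemma norm_eigen:
  assumes "(cnj_transpose A ** A) *v v = complex_of_real s *s v"
  shows "(norm (A *v v))^2 = s * (norm v)^2"
proof -
  have "complex_of_real ((norm (A *v v))^2) = cinner (A *v v) (A *v v)" by (simp add: cinner_self)
  also have "\<dots> = cinner ((cnj_transpose A ** A) *v v) v" by (simp add: cinner_H)
  also have "\<dots> = complex_of_real (s * (norm v)^2)" by (simp add: assms cinner_scale_left cinner_self)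
  finally show ?thesis by (simp only: of_real_eq_iff)
qed

lemma lin_mv: "linear (\<lambda>x. (A::complex^'n^'m) *v x)"
  by (rule matrix_vector_mul_linear)

lemma bl_mv: "bounded_linear (\<lambda>x. (A::complex^'n^'m) *v x)"
  using lin_mv linear_conv_bounded_linear by blast

lemma real_pert:
  fixes a b :: real
  assumes "a > 0" "b \<ge> 0" "\<And>s. s > 0 \<Longrightarrow> 2 * s * a \<le> s^2 * b"
  shows False
proof -
  define s where "s = a / (b + 1)"
  have s0: "s > 0" using assms by (simp add: s_def)
  have "s * b < a"
  proof -
    have "s * b = a * (b / (b + 1))" by (simp add: s_def)
    also have "\<dots> < a * 1" using assms by (intro mult_strict_left_mono) auto
    finally show ?thesis by simp
  qed
  then have "s^2 * b < s * a" using s0 by (simp add: power2_eq_square mult.assoc)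
  moreover have "2 * s * a \<le> s^2 * b" using assms(3) s0 by blast
  moreover have "s * a > 0" using s0 assms(1) by simp
  ultimately show False by linarith
qed

lemma nsq: "(norm (a + s *\<^sub>R b))^2 = (norm a)^2 + 2 * s * inner a b + s^2 * (norm (b::'a::real_inner))^2"
proof -
  have "(norm (a + s *\<^sub>R b))^2 = (norm a)^2 + (norm (s *\<^sub>R b))^2 + 2 * inner a (s *\<^sub>R b)"
    using dot_norm[of a "s *\<^sub>R b"] by simp
  then show ?thesis by (simp add: power_mult_distrib)
qed

lemma top_sv:
  fixes A :: "complex^'n^'n"
  shows "\<exists>x L. x \<noteq> 0 \<and> L \<ge> 0 \<and> (cnj_transpose A ** A) *v x = complex_of_real (L^2) *s x
     \<and> (\<forall>y. norm (A *v y) \<le> L * norm y)"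
proof -
  let ?f = "\<lambda>y. norm (A *v y)"
  have cont: "continuous_on (sphere 0 1) ?f"
    by (rule continuous_on_norm linear_continuous_on bl_mv)+
  obtain x0 where x0: "x0 \<in> sphere 0 1" and mx: "\<forall>y\<in>sphere 0 1. ?f y \<le> ?f x0"
    using continuous_attains_sup[OF compact_sphere _ cont] by auto
  define L where "L = ?f x0"
  have nx0: "norm x0 = 1" using x0 by simp
  have bound: "norm (A *v y) \<le> L * norm y" for y
  proof (cases "y = 0")
    case True then show ?thesis by simp
  next
    case False
    define u where "u = (1 / norm y) *\<^sub>R y"
    have "u \<in> sphere 0 1" using False by (simp add: u_def)
    then have "norm (A *v u) \<le> L" using mx L_def by blast
    moreover have "A *v u = (1 / norm y) *\<^sub>R (A *v y)"
      unfolding u_def using lin_mv[of A] by (simp add: linear_scale)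
    ultimately have "norm (A *v y) / norm y \<le> L" using False by simp
    then show ?thesis using False by (simp add: divide_le_eq mult.commute)
  qed
  define H where "H = cnj_transpose A ** A"
  define g where "g = H *v x0 - complex_of_real (L^2) *s x0"
  have key: "2 * s * inner g y \<le> s^2 * (L^2 * (norm y)^2)" if s: "s > 0" for s y
  proof -
    have "(norm (A *v (x0 + s *\<^sub>R y)))^2 \<le> (L * norm (x0 + s *\<^sub>R y))^2"
      using bound by (intro power_mono) auto
    moreover have "A *v (x0 + s *\<^sub>R y) = A *v x0 + s *\<^sub>R (A *v y)"
      using lin_mv[of A] by (simp add: linear_add linear_scale)
    ultimately have I: "(norm (A *v x0 + s *\<^sub>R (A *v y)))^2 \<le> L^2 * (norm (x0 + s *\<^sub>R y))^2"
      by (simp add: power_mult_distrib)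
    have e1: "(norm (A *v x0 + s *\<^sub>R (A *v y)))^2 = L^2 + 2 * s * inner (A *v x0) (A *v y) + s^2 * (norm (A *v y))^2"
      by (simp add: nsq L_def)
    have e2: "(norm (x0 + s *\<^sub>R y))^2 = 1 + 2 * s * inner x0 y + s^2 * (norm y)^2"
      by (simp add: nsq nx0)
    have e3: "inner g y = inner (A *v x0) (A *v y) - L^2 * inner x0 y"
    proof -
      have "cinner g y = cinner (A *v x0) (A *v y) - complex_of_real (L^2) * cinner x0 y"
        by (simp add: g_def H_def cinner_diff_left cinner_scale_left cinner_H)
      then show ?thesis by (simp add: inner_cinner)
    qed
    have "2 * s * inner g y = 2 * s * inner (A *v x0) (A *v y) - L^2 * (2 * s * inner x0 y)"
      by (simp add: e3 algebra_simps)
    also have "\<dots> \<le> s^2 * (L^2 * (norm y)^2) - s^2 * (norm (A *v y))^2"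
    proof -
      have "L^2 + 2 * s * inner (A *v x0) (A *v y) + s^2 * (norm (A *v y))^2
          \<le> L^2 + L^2 * (2 * s * inner x0 y) + L^2 * (s^2 * (norm y)^2)"
        using I unfolding e1 e2 by (simp add: distrib_left)
      then show ?thesis by (simp add: mult.commute mult.left_commute)
    qed
    also have "\<dots> \<le> s^2 * (L^2 * (norm y)^2)" by simp
    finally show ?thesis .
  qed
  have "g = 0"
  proof (rule ccontr)
    assume "g \<noteq> 0"
    then have "inner g g > 0" by simp
    moreover have "L^2 * (norm g)^2 \<ge> 0" by simp
    ultimately show False using key[of _ g] by (intro real_pert[of "inner g g" "L^2 * (norm g)^2"]) auto
  qed
  then have "H *v x0 = complex_of_real (L^2) *s x0" by (simp add: g_def)
  moreover have "x0 \<noteq> 0" using nx0 by auto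
  moreover have "L \<ge> 0" by (simp add: L_def)
  ultimately show ?thesis using bound by (auto simp: H_def)
qed


lemma sv_finite: "finite (singular_values (A::complex^'n^'n))"
proof -
  define S where "S = singular_values A"
  define H where "H = cnj_transpose A ** A"
  define V where "V \<sigma> = (SOME v. v \<noteq> 0 \<and> H *v v = complex_of_real (\<sigma>\<^sup>2) *s v)" for \<sigma>
  have V: "V \<sigma> \<noteq> 0 \<and> H *v V \<sigma> = complex_of_real (\<sigma>\<^sup>2) *s V \<sigma>" if "\<sigma> \<in> S" for \<sigma>
  proof -
    have "\<exists>v. v \<noteq> 0 \<and> H *v v = complex_of_real (\<sigma>\<^sup>2) *s v"
      using that by (simp add: S_def H_def singular_values_def)
    then show ?thesis unfolding V_def by (rule someI_ex)
  qed
  have nn: "\<sigma> \<ge> 0" if "\<sigma> \<in> S" for \<sigma> using that by (simp add: S_def singular_values_def)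
  have orth: "inner (V \<sigma>) (V \<tau>) = 0" if st: "\<sigma> \<in> S" "\<tau> \<in> S" "\<sigma> \<noteq> \<tau>" for \<sigma> \<tau>
  proof -
    let ?v = "V \<sigma>" and ?w = "V \<tau>"
    have "cinner (H *v ?v) ?w = complex_of_real (\<sigma>\<^sup>2) * cinner ?v ?w"
      using V[OF st(1)] by (simp add: cinner_scale_left)
    moreover have "cinner (H *v ?v) ?w = complex_of_real (\<tau>\<^sup>2) * cinner ?v ?w"
    proof -
      have "cinner (H *v ?v) ?w = cinner (A *v ?v) (A *v ?w)" by (simp add: H_def cinner_H)
      also have "\<dots> = cnj (cinner (A *v ?w) (A *v ?v))" by (rule cinner_commute)
      also have "\<dots> = cnj (cinner (H *v ?w) ?v)" by (simp add: H_def cinner_H)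
      also have "\<dots> = cnj (complex_of_real (\<tau>\<^sup>2) * cinner ?w ?v)"
        using V[OF st(2)] by (simp add: cinner_scale_left)
      also have "\<dots> = complex_of_real (\<tau>\<^sup>2) * cinner ?v ?w" by (simp add: cinner_commute[of ?w ?v])
      finally show ?thesis .
    qed
    ultimately have eq: "complex_of_real (\<sigma>\<^sup>2) * cinner ?v ?w = complex_of_real (\<tau>\<^sup>2) * cinner ?v ?w"
      by metis
    have prod0: "(complex_of_real (\<sigma>\<^sup>2) - complex_of_real (\<tau>\<^sup>2)) * cinner ?v ?w = 0"
      by (simp only: left_diff_distrib eq diff_self)
    have "\<sigma>\<^sup>2 \<noteq> \<tau>\<^sup>2" using st nn by (simp add: power2_eq_iff_nonneg)
    then have ne: "complex_of_real (\<sigma>\<^sup>2) - complex_of_real (\<tau>\<^sup>2) \<noteq> 0"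
      by (simp only: of_real_diff[symmetric] of_real_eq_0_iff)
    with prod0 have "cinner ?v ?w = 0" by (simp only: mult_eq_0_iff) blast
    then show ?thesis by (simp add: inner_cinner)
  qed
  have inj: "inj_on V S"
  proof (rule inj_onI)
    fix \<sigma> \<tau> assume st: "\<sigma> \<in> S" "\<tau> \<in> S" "V \<sigma> = V \<tau>"
    show "\<sigma> = \<tau>"
    proof (rule ccontr)
      assume "\<sigma> \<noteq> \<tau>"
      then have "inner (V \<sigma>) (V \<sigma>) = 0" using orth[OF st(1,2)] st(3) by simp
      then show False using V[OF st(1)] by simp
    qed
  qed
  have "pairwise orthogonal (V ` S)"
    unfolding pairwise_def orthogonal_def using orth by fastforce
  moreover have "0 \<notin> V ` S" using V by auto
  ultimately have "independent (V ` S)" by (rule pairwise_orthogonal_independent)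
  then have "finite (V ` S)" using independent_bound by blast
  then show ?thesis using inj finite_imageD S_def by blast
qed

lemma norm_le_lsv:
  fixes A :: "complex^'n^'n"
  shows "norm (A *v y) \<le> largest_singular_value A * norm y"
proof -
  obtain x L where x: "x \<noteq> 0" "L \<ge> 0" "(cnj_transpose A ** A) *v x = complex_of_real (L^2) *s x"
    and b: "\<forall>y. norm (A *v y) \<le> L * norm y"
    using top_sv[of A] by blast
  have "L \<in> singular_values A" using x unfolding singular_values_def by blast
  then have "L \<le> largest_singular_value A"
    unfolding largest_singular_value_def using sv_finite by (rule Max_ge[rotated])
  then show ?thesis using b by (meson mult_right_mono norm_ge_zero order_trans)
qed

lemma mat_norm2_le_lsv: "mat_norm2 (A::complex^'n^'n) \<le> largest_singular_value A"
  unfolding mat_norm2_def by (rule onorm_le) (rule norm_le_lsv)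


lemma norm_diff_scale_sq:
  fixes a b :: "complex^'n"
  shows "(norm (a - z *s b))^2 = (norm a)^2 - 2 * Re (cnj z * cinner a b) + (cmod z)^2 * (norm b)^2"
proof -
  have "complex_of_real ((norm (a - z *s b))^2) = cinner (a - z *s b) (a - z *s b)" by (simp add: cinner_self)
  also have "\<dots> = cinner a a - cnj z * cinner a b - z * cinner b a + z * cnj z * cinner b b"
    by (simp add: cinner_diff_left cinner_diff_right cinner_scale_left cinner_scale_right algebra_simps)
  also have "\<dots> = cinner a a - (cnj z * cinner a b + cnj (cnj z * cinner a b)) + z * cnj z * cinner b b"
    by (simp add: cinner_commute[of b a])
  also have "cnj z * cinner a b + cnj (cnj z * cinner a b) = complex_of_real (2 * Re (cnj z * cinner a b))"
    by (rule complex_add_cnj)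
  also have "cinner a a - complex_of_real (2 * Re (cnj z * cinner a b)) + z * cnj z * cinner b b
      = complex_of_real ((norm a)^2 - 2 * Re (cnj z * cinner a b) + (cmod z)^2 * (norm b)^2)"
    by (simp only: cinner_self complex_norm_square[symmetric] of_real_add of_real_diff of_real_mult)
  finally show ?thesis by (simp only: of_real_eq_iff)
qed

theorem theorem2:
  fixes Psi :: "complex^'n^'n" and \<theta> :: real and as :: "complex list" and v1 :: "complex^'n"
  assumes spec: "\<forall>l\<in>mat_spectrum Psi. cmod l < 1"
    and B_param: "blaschke_params (CARD('n) - 1) as"
    and B_max: "\<And>\<theta>' as'. blaschke_params (CARD('n) - 1) as' \<Longrightarrow>
                 mat_norm2 (blaschke_mat \<theta>' as' Psi) \<le> mat_norm2 (blaschke_mat \<theta> as Psi)"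
    and B_gt1: "mat_norm2 (blaschke_mat \<theta> as Psi) > 1"
    and v1: "right_singular_vector (blaschke_mat \<theta> as Psi)
               (largest_singular_value (blaschke_mat \<theta> as Psi)) v1"
  shows "cinner (blaschke_mat \<theta> as Psi *v v1) v1 = 0"
proof (rule ccontr)
  define M where "M = blaschke_mat \<theta> as Psi"
  define \<sigma> where "\<sigma> = largest_singular_value M"
  define c where "c = cinner (M *v v1) v1"
  assume "cinner (blaschke_mat \<theta> as Psi *v v1) v1 \<noteq> 0"
  then have c0: "c \<noteq> 0" by (simp add: c_def M_def)
  have vv: "\<sigma> \<ge> 0" "v1 \<noteq> 0" "(cnj_transpose M ** M) *v v1 = complex_of_real (\<sigma>\<^sup>2) *s v1"
    using v1 by (auto simp: right_singular_vector_def M_def \<sigma>_def)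
  have nMv: "(norm (M *v v1))^2 = \<sigma>^2 * (norm v1)^2" by (rule norm_eigen[OF vv(3)])
  have nM: "mat_norm2 M \<le> \<sigma>" unfolding \<sigma>_def by (rule mat_norm2_le_lsv)
  have s1: "\<sigma> > 1" using nM B_gt1 by (simp add: M_def)
  define V where "V = (norm v1)^2"
  define S where "S = \<sigma>^2"
  define k where "k = (cmod c)^2"
  have V0: "V > 0" using vv(2) by (simp add: V_def)
  have S1: "S > 1" using s1 by (simp add: S_def one_less_power)
  have k0: "k > 0" using c0 by (simp add: k_def)
  define \<epsilon> where "\<epsilon> = 1 / (V * (S + 1) + 2 * cmod c)"
  have VS: "V * (S + 1) > 0" using V0 S1 by simp
  have den: "V * (S + 1) + 2 * cmod c > 0" using VS by (intro add_pos_nonneg) auto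
  have e0: "\<epsilon> > 0" using den by (simp add: \<epsilon>_def)
  define t where "t = complex_of_real \<epsilon> * c"
  have tn: "cmod t = \<epsilon> * cmod c" using e0 by (simp add: t_def norm_mult)
  have t1: "cmod t < 1"
  proof -
    have "\<epsilon> * cmod c = cmod c / (V * (S + 1) + 2 * cmod c)" by (simp add: \<epsilon>_def)
    also have "\<dots> < 1" using den VS by (simp add: divide_less_eq)
    finally show ?thesis using tn by simp
  qed
  have eV: "\<epsilon> * (V * (S + 1)) \<le> 1"
  proof -
    have "\<epsilon> * (V * (S + 1)) = V * (S + 1) / (V * (S + 1) + 2 * cmod c)" by (simp add: \<epsilon>_def)
    also have "\<dots> \<le> 1" using den VS by (simp add: divide_le_eq)
    finally show ?thesis .
  qed
  have as: "\<forall>a\<in>set as. cmod a \<le> 1" using B_param by (simp add: blaschke_params_def)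
  obtain \<theta>' bs where bs: "length bs = length as" "\<forall>b\<in>set bs. cmod b \<le> 1"
    and eq: "blaschke_mat \<theta>' bs Psi ** (mat 1 - mat (cnj t) ** M) = M - mat t"
    using perturb_mat[OF spec as t1, of \<theta>] unfolding M_def by blast
  define M' where "M' = blaschke_mat \<theta>' bs Psi"
  have "blaschke_params (CARD('n) - 1) bs" using bs B_param by (simp add: blaschke_params_def)
  then have "mat_norm2 M' \<le> mat_norm2 M" using B_max by (simp add: M'_def M_def)
  then have nM': "mat_norm2 M' \<le> \<sigma>" using nM by linarith
  define w where "w = v1 - cnj t *s (M *v v1)"
  have Mw: "M' *v w = M *v v1 - t *s v1"
  proof -
    have "(M' ** (mat 1 - mat (cnj t) ** M)) *v v1 = (M - mat t) *v v1" using eq by (simp add: M'_def)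
    then show ?thesis
      by (simp add: w_def matrix_vector_mul_assoc[symmetric] matrix_vector_diff_rdistrib' mat_mult_vec)
  qed
  have "norm (M' *v w) \<le> mat_norm2 M' * norm w"
    unfolding mat_norm2_def by (rule onorm[OF bl_mv])
  also have "\<dots> \<le> \<sigma> * norm w" using nM' by (simp add: mult_right_mono)
  finally have "norm (M *v v1 - t *s v1) \<le> \<sigma> * norm w" using Mw by simp
  then have ineq0: "(norm (M *v v1 - t *s v1))^2 \<le> S * (norm w)^2"
    by (metis S_def norm_ge_zero power_mono power_mult_distrib)
  have ck: "c * cnj c = complex_of_real k" unfolding k_def by (metis complex_norm_square of_real_power)
  have tc: "t * cnj c = complex_of_real (\<epsilon> * k)"
    by (simp add: t_def ck mult.assoc)
  have ct: "cnj t * c = complex_of_real (\<epsilon> * k)"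
    by (simp add: t_def ck mult.commute mult.left_commute)
  have tt: "(cmod t)^2 = \<epsilon>^2 * k" using tn by (simp add: k_def power_mult_distrib)
  have rct: "Re (cnj t * c) = \<epsilon> * k" by (simp only: ct Re_complex_of_real)
  have rtc: "Re (t * cnj c) = \<epsilon> * k" by (simp only: tc Re_complex_of_real)
  have L: "(norm (M *v v1 - t *s v1))^2 = S * V - 2 * (\<epsilon> * k) + \<epsilon>^2 * k * V"
  proof -
    have "(norm (M *v v1 - t *s v1))^2 = (norm (M *v v1))^2 - 2 * Re (cnj t * c) + (cmod t)^2 * (norm v1)^2"
      unfolding c_def by (rule norm_diff_scale_sq)
    then show ?thesis unfolding S_def V_def by (simp only: nMv rct tt)
  qed
  have cv: "cinner v1 (M *v v1) = cnj c" by (simp add: c_def cinner_commute[of v1])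
  have R: "(norm w)^2 = V - 2 * (\<epsilon> * k) + \<epsilon>^2 * k * (S * V)"
  proof -
    have "(norm w)^2 = (norm v1)^2 - 2 * Re (cnj (cnj t) * cinner v1 (M *v v1)) + (cmod (cnj t))^2 * (norm (M *v v1))^2"
      unfolding w_def by (rule norm_diff_scale_sq)
    then show ?thesis unfolding S_def V_def by (simp only: complex_cnj_cnj complex_mod_cnj cv rtc tt nMv)
  qed
  have ineq: "S * V - 2 * (\<epsilon> * k) + \<epsilon>^2 * k * V \<le> S * (V - 2 * (\<epsilon> * k) + \<epsilon>^2 * k * (S * V))"
    using ineq0 L R by simp
  have ident: "S * (V - 2 * (\<epsilon> * k) + \<epsilon>^2 * k * (S * V)) - (S * V - 2 * (\<epsilon> * k) + \<epsilon>^2 * k * V)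
      = (\<epsilon> * k * (S - 1)) * (\<epsilon> * (V * (S + 1)) - 2)"
    by (simp add: algebra_simps power2_eq_square)
  have pos: "\<epsilon> * k * (S - 1) > 0" using e0 k0 S1 by simp
  have "(\<epsilon> * k * (S - 1)) * (\<epsilon> * (V * (S + 1)) - 2) \<ge> 0" using ineq ident by linarith
  then have "\<epsilon> * (V * (S + 1)) - 2 \<ge> 0" using pos by (simp add: zero_le_mult_iff)
  with eV show False by linarith
qed

end
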